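(* Let $N\ge 2$ be an integer. Define $A,B:\mathbb{R}^2\to\mathbb{R}^2$ by $B=0$ (the zero operator) and $A(x_1,x_2)=\left(-\tfrac{x_2}{\sqrt{N-1}},\ \tfrac{x_1}{\sqrt{N-1}}\right)$. Then $A$ and $B$ are maximally monotone, $B$ is $\beta$-cocoercive for every $\beta>0$, and for the Douglas–Rachford splitting iteration with stepsize $\gamma=1$ and relaxation $\lambda=1$, the DR operator $T$ has unique fixed point $w^\star=0$ and for every initial point $w^1\in\mathbb{R}^2$, $$\|Tw^N-w^N\|^2=\frac{(N-1)^{N-1}}{N^N}\,\|w^1-w^\star\|^2 .$$
   Context: For a maximally monotone operator $M$, $J_M=(I+M)^{-1}$ and $R_M=2J_M-I$. For maximally monotone $A,B$, $\gamma>0$, $\lambda\in(0,2)$, the DR operator is $T=(1-\tfrac{\lambda}{2})I+\tfrac{\lambda}{2}R_{\gamma A}R_{\gamma B}$, and the DRS iteration is $x^k=J_{\gamma B}(w^k)$, $y^k=J_{\gamma A}(2x^k-w^k)$, $w^{k+1}=w^k+\lambda(y^k-x^k)=Tw^k$. An operator $M$ is $\beta$-cocoercive ($\beta>0$) if $\langle u-v,x-y\rangle\ge\beta\|u-v\|^2$ for all $(x,u),(y,v)$ in the graph of $M$. *)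

theory Defs
  imports "HOL-Analysis.Analysis"
begin

text \<open>Set-valued operators on a real inner product space are modelled as
  functions M :: 'a \<Rightarrow> 'a set (the graph is {(x,u). u \<in> M x}).\<close>

definition monotone_op :: "('a::real_inner \<Rightarrow> 'a set) \<Rightarrow> bool" where
  "monotone_op M \<longleftrightarrow>
     (\<forall>x y u v. u \<in> M x \<longrightarrow> v \<in> M y \<longrightarrow> inner (u - v) (x - y) \<ge> 0)"

definition max_monotone :: "('a::real_inner \<Rightarrow> 'a set) \<Rightarrow> bool" where
  "max_monotone M \<longleftrightarrow> monotone_op M \<and>
     (\<forall>M'. monotone_op M' \<and> (\<forall>x. M x \<subseteq> M' x) \<longrightarrow> M' = M)"

definition cocoercive :: "real \<Rightarrow> ('a::real_inner \<Rightarrow> 'a set) \<Rightarrow> bool" where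
  "cocoercive \<beta> M \<longleftrightarrow> \<beta> > 0 \<and>
     (\<forall>x y u v. u \<in> M x \<longrightarrow> v \<in> M y \<longrightarrow> inner (u - v) (x - y) \<ge> \<beta> * (norm (u - v))\<^sup>2)"

definition scale_op :: "real \<Rightarrow> ('a::real_vector \<Rightarrow> 'a set) \<Rightarrow> 'a \<Rightarrow> 'a set" where
  "scale_op \<gamma> M x = (\<lambda>u. \<gamma> *\<^sub>R u) ` M x"

text \<open>Resolvent J_M = (I + M)^{-1}: J_M w is the (unique, for maximally monotone M)
  point x with w \<in> x + M x.\<close>
definition resolvent :: "('a::real_vector \<Rightarrow> 'a set) \<Rightarrow> 'a \<Rightarrow> 'a" where
  "resolvent M w = (THE x. w - x \<in> M x)"

definition reflected_resolvent :: "('a::real_vector \<Rightarrow> 'a set) \<Rightarrow> 'a \<Rightarrow> 'a" where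
  "reflected_resolvent M w = 2 *\<^sub>R resolvent M w - w"

definition DR_op :: "('a::real_vector \<Rightarrow> 'a set) \<Rightarrow> ('a \<Rightarrow> 'a set) \<Rightarrow> real \<Rightarrow> real \<Rightarrow> 'a \<Rightarrow> 'a" where
  "DR_op A B \<gamma> lam w = (1 - lam / 2) *\<^sub>R w
     + (lam / 2) *\<^sub>R reflected_resolvent (scale_op \<gamma> A) (reflected_resolvent (scale_op \<gamma> B) w)"

text \<open>DRS iterates with w^1 given and w^{k+1} = T w^k, so w^k = T^(k-1) w^1.\<close>
definition DRS_iter :: "('a::real_vector \<Rightarrow> 'a set) \<Rightarrow> ('a \<Rightarrow> 'a set) \<Rightarrow> real \<Rightarrow> real \<Rightarrow> 'a \<Rightarrow> nat \<Rightarrow> 'a" where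
  "DRS_iter A B \<gamma> lam w1 k = (DR_op A B \<gamma> lam ^^ (k - 1)) w1"

end

theory Submission
  imports Defs
begin

lemma l1: fixes a b s :: real assumes "s \<noteq> 0" "s^2+1 \<noteq> 0"
  shows "a - s*(s*a+b)/(s^2+1) = - (s*(s*b - a)/(s^2+1))/s"
  using assms by (simp add: divide_simps) algebra
lemma l2: fixes a b s :: real assumes "s \<noteq> 0" "s^2+1 \<noteq> 0"
  shows "b - s*(s*b-a)/(s^2+1) = (s*(s*a + b)/(s^2+1))/s"
  using assms by (simp add: divide_simps) algebra
lemma l3: fixes a b s x y :: real assumes "s \<noteq> 0" "s^2+1 \<noteq> 0"
  "s * a - s * x = - y" "s * b - s * y = x"
  shows "x = s*(s*a+b)/(s^2+1) \<and> y = s*(s*b-a)/(s^2+1)"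
  using assms by (simp add: divide_simps) algebra

lemma l4: fixes a b s :: real assumes "s^2+1 \<noteq> 0"
  shows "(s*(s*a+b)/(s^2+1))^2 + (s*(s*b-a)/(s^2+1))^2 = s^2/(s^2+1) * (a^2+b^2)"
  using assms by (simp add: divide_simps) algebra
lemma l5: fixes x :: real and N :: nat assumes "N \<ge> 2"
  shows "((real N - 1)/(real N - 1 + 1))^N / (real N - 1) * x = (real N - 1) ^ (N - 1) / real N ^ N * x"
proof -
  have "N = Suc (N - 1)" using assms by simp
  then have "(real N - 1) ^ N = (real N - 1) * (real N - 1) ^ (N - 1)" by (metis power_Suc)
  moreover have "real N - 1 \<noteq> 0" using assms by simp
  ultimately show ?thesis by (simp add: power_divide)
qed

lemma inner_vec2: "inner (x::real^2) y = x$1 * y$1 + x$2 * y$2"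
  by (simp add: inner_vec_def sum_2)

lemma norm2_vec2: "(norm (x::real^2))\<^sup>2 = (x$1)\<^sup>2 + (x$2)\<^sup>2"
  by (metis power2_norm_eq_inner inner_vec2 power2_eq_square)

lemma vec2_eq: "(x::real^2) = y \<longleftrightarrow> x$1 = y$1 \<and> x$2 = y$2"
  by (simp add: vec_eq_iff forall_2)

theorem mainTheorem3:
  fixes N :: nat and A B :: "real^2 \<Rightarrow> (real^2) set"
  assumes hN: "N \<ge> 2"
    and hA: "\<And>x. A x = {vector [- x$2 / sqrt (real N - 1), x$1 / sqrt (real N - 1)]}"
    and hB: "\<And>x. B x = {0}"
  shows "max_monotone A \<and> max_monotone B \<and> (\<forall>\<beta>>0. cocoercive \<beta> B)
     \<and> {w. DR_op A B 1 1 w = w} = {0}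
     \<and> (\<forall>w1. (norm (DR_op A B 1 1 (DRS_iter A B 1 1 w1 N) - DRS_iter A B 1 1 w1 N))\<^sup>2
            = (real N - 1) ^ (N - 1) / real N ^ N * (norm (w1 - 0))\<^sup>2)"
proof -
  define s where "s = sqrt (real N - 1)"
  have s2: "s^2 = real N - 1" using hN unfolding s_def by simp
  have spos: "s > 0" using hN unfolding s_def by simp
  define A0 :: "real^2 \<Rightarrow> real^2" where "A0 x = vector [- x$2 / s, x$1 / s]" for x
  have hA': "A x = {A0 x}" for x using hA unfolding A0_def s_def by simp
  have A01: "A0 x $ 1 = - x$2 / s" and A02: "A0 x $ 2 = x$1 / s" for x
    unfolding A0_def by simp_all
  have skew: "inner (A0 d) d = 0" for d
    by (simp add: inner_vec2 A01 A02 algebra_simps)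
  have A0lin: "A0 x - A0 y = A0 (x - y)" for x y
    by (simp add: vec2_eq A01 A02 diff_divide_distrib)
  have monoA: "monotone_op A"
    unfolding monotone_op_def hA' using A0lin skew by (simp add: inner_commute)
  have maxA: "max_monotone A"
    unfolding max_monotone_def
  proof (intro conjI monoA allI impI)
    fix M' assume H: "monotone_op M' \<and> (\<forall>x. A x \<subseteq> M' x)"
    have "M' x \<subseteq> A x" for x
    proof
      fix u assume u: "u \<in> M' x"
      define d where "d = u - A0 x"
      have "A0 (x + d) \<in> M' (x + d)" using H hA' by auto
      then have "inner (u - A0 (x + d)) (x - (x + d)) \<ge> 0"
        using H u unfolding monotone_op_def by blast
      moreover have "A0 (x + d) = A0 x + A0 d" using A0lin[of "x + d" d] by (metis diff_eq_eq)
      ultimately have "inner (d - A0 d) (- d) \<ge> 0" unfolding d_def by (simp add: algebra_simps)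
      then have "- inner d d \<ge> 0" using skew[of d] by (simp add: inner_diff_left inner_diff_right inner_commute)
      then have "d = 0" by (metis inner_gt_zero_iff linorder_not_le neg_0_le_iff_le)
      then show "u \<in> A x" using hA' d_def by simp
    qed
    then show "M' = A" using H by (intro ext) blast
  qed
  have monoB: "monotone_op B" unfolding monotone_op_def hB by simp
  have maxB: "max_monotone B"
    unfolding max_monotone_def
  proof (intro conjI monoB allI impI)
    fix M' assume H: "monotone_op M' \<and> (\<forall>x. B x \<subseteq> M' x)"
    have "M' x \<subseteq> B x" for x
    proof
      fix u assume u: "u \<in> M' x"
      have "0 \<in> M' (x + u)" using H hB by auto
      then have "inner (u - 0) (x - (x + u)) \<ge> 0"
        using H u unfolding monotone_op_def by blast
      then have "u = 0" by (simp add: inner_diff_right) (metis inner_gt_zero_iff linorder_not_le)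
      then show "u \<in> B x" using hB by simp
    qed
    then show "M' = B" using H by (intro ext) blast
  qed
  have cocB: "\<forall>\<beta>>0. cocoercive \<beta> B" unfolding cocoercive_def hB by simp
  have resB: "resolvent (scale_op 1 B) w = w" for w
    unfolding resolvent_def scale_op_def hB by simp
  define T :: "real^2 \<Rightarrow> real^2" where
    "T w = vector [s * (s * w$1 + w$2) / (s^2 + 1), s * (s * w$2 - w$1) / (s^2 + 1)]" for w
  have T1: "T w $ 1 = s * (s * w$1 + w$2) / (s^2 + 1)" and T2: "T w $ 2 = s * (s * w$2 - w$1) / (s^2 + 1)" for w
    unfolding T_def by simp_all
  have d: "s^2 + 1 \<noteq> 0" using s2 hN by simp
  have resEq: "w - T w = A0 (T w)" for w
  proof -
    have sn: "s \<noteq> 0" using spos by simp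
    have c1: "w$1 - T w$1 = - T w$2 / s"
      unfolding T1 T2 using sn d by (rule l1)
    have c2: "w$2 - T w$2 = T w$1 / s"
      unfolding T1 T2 using sn d by (rule l2)
    show "w - T w = A0 (T w)"
      unfolding vec2_eq using c1 c2 by (simp add: A01 A02)
  qed
  have resA: "resolvent (scale_op 1 A) w = T w" for w
    unfolding resolvent_def scale_op_def hA'
  proof (simp, rule the_equality)
    have d: "s^2 + 1 \<noteq> 0" using s2 hN by simp
    have sn: "s \<noteq> 0" using spos by simp
    have d3: "s + s * (s * s) \<noteq> 0" using spos by (smt (verit) mult_pos_pos)
    have c1: "w$1 - T w$1 = - T w$2 / s"
      unfolding T1 T2 using sn d by (rule l1)
    have c2: "w$2 - T w$2 = T w$1 / s"
      unfolding T1 T2 using sn d by (rule l2)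
    show "w - T w = A0 (T w)"
      unfolding vec2_eq using c1 c2 by (simp add: A01 A02)
  next
    fix y assume "w - y = A0 y"
    then have e1: "w$1 - y$1 = - y$2 / s" and e2: "w$2 - y$2 = y$1 / s"
      unfolding vec2_eq by (simp_all add: A01 A02)
    have d: "s^2 + 1 \<noteq> 0" using s2 hN by simp
    from e1 e2 spos have f1: "s * w$1 - s * y$1 = - y$2" and f2: "s * w$2 - s * y$2 = y$1"
      by (simp_all add: field_simps)
    show "y = T w" unfolding vec2_eq T1 T2 using l3[OF _ d f1 f2] spos by simp
  qed
  have RB: "2 *\<^sub>R w - w = w" for w :: "real^2" by (simp add: scaleR_2)
  have DR: "DR_op A B 1 1 w = T w" for w
    unfolding DR_op_def reflected_resolvent_def resB RB resA by (simp add: vec2_eq field_simps)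
  have DRf: "DR_op A B 1 1 = T" using DR by (intro ext) simp
  have fixp: "{w. DR_op A B 1 1 w = w} = {0}"
  proof safe
    fix w :: "real^2" assume "DR_op A B 1 1 w = w"
    then have "T w = w" using DR by simp
    then have "A0 w = 0" using resEq[of w] by simp
    then show "w = 0" using spos unfolding vec2_eq by (simp add: A01 A02)
  next
    show "DR_op A B 1 1 0 = 0" unfolding DR vec2_eq T1 T2 by simp
  qed
  define c where "c = s^2/(s^2+1)"
  have normT: "(norm (T w))\<^sup>2 = c * (norm w)\<^sup>2" for w
    unfolding norm2_vec2 T1 T2 c_def using l4[OF d] by simp
  have normTd: "(norm (T w - w))\<^sup>2 = (norm (T w))\<^sup>2 / s^2" for w
  proof -
    have "T w - w = - A0 (T w)" using resEq[of w] by (simp add: algebra_simps)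
    then show ?thesis unfolding norm2_vec2 using spos
      by (simp add: A01 A02 power_divide add_divide_distrib)
  qed
  have iter: "(norm ((T ^^ k) w))\<^sup>2 = c ^ k * (norm w)\<^sup>2" for k w
    by (induction k) (simp_all add: normT)
  have main: "(norm (DR_op A B 1 1 (DRS_iter A B 1 1 w1 N) - DRS_iter A B 1 1 w1 N))\<^sup>2
            = (real N - 1) ^ (N - 1) / real N ^ N * (norm (w1 - 0))\<^sup>2" for w1
  proof -
    have "T ((T ^^ (N - 1)) w1) = (T ^^ N) w1"
      using hN by (metis Suc_diff_1 funpow.simps(2) o_apply less_le_trans zero_less_numeral)
    then have "(norm (DR_op A B 1 1 (DRS_iter A B 1 1 w1 N) - DRS_iter A B 1 1 w1 N))\<^sup>2
        = c ^ N * (norm w1)\<^sup>2 / s^2"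
      unfolding DRS_iter_def DRf normTd by (simp add: iter)
    also have "\<dots> = ((real N - 1)/(real N - 1 + 1))^N / (real N - 1) * (norm w1)\<^sup>2"
      unfolding c_def s2 by simp
    also have "\<dots> = (real N - 1) ^ (N - 1) / real N ^ N * (norm w1)\<^sup>2"
      by (rule l5[OF hN])
    finally show ?thesis by simp
  qed
  show ?thesis using maxA maxB cocB fixp main by blast
qed

end
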